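(* Let $m$ be an integer with $m\ge 1$ or $m\le -2$, let $T_j(z,w)=w^jS_j(z/w)$, let \[F=\left[(xyw-u^2z)w^{2m}+(xyzw+4u^2w^2-x^2w^2-y^2w^2-u^2z^2)T_mT_{m-1}\right]T_{m-1}-u^2w^{2m}T_m,\] let $S=\{F=0\}\subset\mathbb P^2(x:y:u)\times\mathbb P^1(z:w)$ and $\phi:S\to\mathbb P^1$, $(x:y:u,z:w)\mapsto(z:w)$. The degenerate fibers of $\phi$ (those over points $(z:w)$ for which $F=F_x=F_y=F_u=0$ has a solution $(x:y:u)\in\mathbb P^2$) are exactly: $\phi^{-1}(1:0)=\{(x:y:u)\mid u^2=0\}$; $\phi^{-1}(z:1)=\{(x:y:u)\mid u^2=0\}$ where $z$ is a root of $S_{m-1}(z)$; $\phi^{-1}(z:1)=\{(x:y:u)\mid (xS_m(z)-yS_{m-1}(z))(yS_m(z)-xS_{m-1}(z))=0\}$ where $z$ is a root of $S_{3m}(z)$; $\phi^{-1}(z:1)=\{(x:y:u)\mid (x-y)^2-(2-z)u^2=0\}$ where $z$ is a root of $S_m(z)-S_{m-1}(z)$; $\phi^{-1}(z:1)=\{(x:y:u)\mid (x+y)^2-(2+z)u^2=0\}$ where $z$ is a root of $S_m(z)+S_{m-1}(z)$.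
   Context: The Chebyshev polynomials $S_j(\omega)$ are defined for all integers $j$ by $S_0=1$, $S_1=\omega$, $S_{j+1}=\omega S_j-S_{j-1}$. $S$ is the projective closure of the natural model of the canonical component of the $\mathrm{SL}_2(\mathbb C)$ character variety of the double twist link $J(3,2m+1)$; each fiber of $\phi$ is a conic in $\mathbb P^2(x:y:u)$. *)

theory Defs
  imports "HOL-Analysis.Analysis" "HOL-Computational_Algebra.Polynomial"
begin

fun chebS_pos :: "nat \<Rightarrow> complex poly" where
  "chebS_pos 0 = 1"
| "chebS_pos (Suc 0) = [:0, 1:]"
| "chebS_pos (Suc (Suc n)) = [:0, 1:] * chebS_pos (Suc n) - chebS_pos n"

text \<open>chebS_neg n = S_(-n), from the same recurrence run backwards:
  S_0 = 1, S_(-1) = X S_0 - S_1 = 0, S_(-(n+2)) = X S_(-(n+1)) - S_(-n).\<close>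
fun chebS_neg :: "nat \<Rightarrow> complex poly" where
  "chebS_neg 0 = 1"
| "chebS_neg (Suc 0) = 0"
| "chebS_neg (Suc (Suc n)) = [:0, 1:] * chebS_neg (Suc n) - chebS_neg n"

definition chebS :: "int \<Rightarrow> complex poly" where
  "chebS j = (if 0 \<le> j then chebS_pos (nat j) else chebS_neg (nat (- j)))"

definition S :: "int \<Rightarrow> complex \<Rightarrow> complex" where
  "S j \<omega> = poly (chebS j) \<omega>"

text \<open>The defining polynomial F dehomogenized at w = 1 (so T_j(z,1) = S_j(z)),
  for fixed (x,y,u), as a polynomial in z.\<close>
definition Fz :: "int \<Rightarrow> complex \<Rightarrow> complex \<Rightarrow> complex \<Rightarrow> complex poly" where
  "Fz m x y u =
     (let Z = [:0, 1:]; Sm = chebS m; Sm1 = chebS (m - 1) in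
      (([:x * y:] - smult (u\<^sup>2) Z)
        + ([:4 * u\<^sup>2 - x\<^sup>2 - y\<^sup>2:] + smult (x * y) Z - smult (u\<^sup>2) (Z ^ 2)) * Sm * Sm1) * Sm1
      - smult (u\<^sup>2) Sm)"

definition fiber_aff :: "int \<Rightarrow> complex \<Rightarrow> complex \<Rightarrow> complex \<Rightarrow> complex \<Rightarrow> complex" where
  "fiber_aff m z x y u = poly (Fz m x y u) z"

text \<open>Total degree of F in z (for w = 1); the projective closure in P^1(z:w) is obtained
  by homogenizing to this degree, so the fiber over (1:0) is given by the coefficient
  of z^D.\<close>
definition zdeg :: "int \<Rightarrow> nat" where
  "zdeg m = Max {degree (Fz m x y u) | x y u. True}"

definition fiber_inf :: "int \<Rightarrow> complex \<Rightarrow> complex \<Rightarrow> complex \<Rightarrow> complex" where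
  "fiber_inf m x y u = coeff (Fz m x y u) (zdeg m)"

definition degenerate :: "(complex \<Rightarrow> complex \<Rightarrow> complex \<Rightarrow> complex) \<Rightarrow> bool" where
  "degenerate Q \<longleftrightarrow> (\<exists>x y u. (x, y, u) \<noteq> (0, 0, 0) \<and> Q x y u = 0
      \<and> deriv (\<lambda>t. Q t y u) x = 0 \<and> deriv (\<lambda>t. Q x t u) y = 0 \<and> deriv (\<lambda>t. Q x y t) u = 0)"

definition same_conic :: "(complex \<Rightarrow> complex \<Rightarrow> complex \<Rightarrow> complex)
    \<Rightarrow> (complex \<Rightarrow> complex \<Rightarrow> complex \<Rightarrow> complex) \<Rightarrow> bool" where
  "same_conic Q R \<longleftrightarrow> (\<exists>c. c \<noteq> 0 \<and> (\<forall>x y u. Q x y u = c * R x y u))"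

end

theory Submission imports Defs begin


lemma S_rec: "S (j+1) z = z * S j z - S (j-1) z"
proof (cases "j \<ge> 1")
  case True
  define n where "n = nat (j-1)"
  have n: "j = int n + 1" using True n_def by simp
  have "chebS_pos (Suc (Suc n)) = [:0, 1:] * chebS_pos (Suc n) - chebS_pos n" by simp
  then show ?thesis using n by (simp add: S_def chebS_def nat_add_distrib)
next
  case False
  show ?thesis
  proof (cases "j = 0")
    case True then show ?thesis by (simp add: S_def chebS_def)
  next
    case False
    with \<open>\<not> j \<ge> 1\<close> have "j \<le> -1" by linarith
    define n where "n = nat (-j-1)"
    have n: "j = - int n - 1" using \<open>j \<le> -1\<close> n_def by simp
    have "chebS_neg (Suc (Suc n)) = [:0, 1:] * chebS_neg (Suc n) - chebS_neg n" by simp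
    show ?thesis
    proof (cases n)
      case 0 then show ?thesis using n by (simp add: S_def chebS_def numeral_2_eq_2)
    next
      case (Suc k)
      have "chebS_neg (Suc (Suc (Suc k))) = [:0, 1:] * chebS_neg (Suc (Suc k)) - chebS_neg (Suc k)" by simp
      moreover have "nat (-(j+1)) = Suc k" "nat (-j) = Suc (Suc k)" "nat (-(j-1)) = Suc (Suc (Suc k))" using n Suc by auto
      moreover have "\<not> 0 \<le> j+1" "\<not> 0 \<le> j" "\<not> 0 \<le> j-1" using n Suc by auto
      ultimately show ?thesis unfolding S_def chebS_def by (simp add: algebra_simps)
    qed
  qed
qed

lemma S_rec': "S (j-1) z = z * S j z - S (j+1) z"
  using S_rec[of j z] by simp

lemma S0: "S 0 z = 1" and Sm1: "S (-1) z = 0" and S1: "S 1 z = z"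
  by (simp_all add: S_def chebS_def)

lemma S_ident: "(S j z)^2 + (S (j-1) z)^2 - z * S j z * S (j-1) z = 1"
proof (induction j rule: int_induct[where k=0])
  case base then show ?case by (simp add: S0 Sm1)
next
  case (step1 i)
  have H: "S (i+1) z = z * S i z - S (i-1) z" by (rule S_rec)
  have e: "i + 1 - 1 = i" by simp
  show ?case unfolding e using step1(2) H by algebra
next
  case (step2 i)
  have H: "S (i-1-1) z = z * S (i-1) z - S i z" using S_rec'[of "i-1" z] by simp
  show ?case using step2(2) H by algebra
qed

lemma step_alg:
  fixes z A2 A1 A0 P Q B2 B1 B0 C2 C1 C0 :: complex
  assumes "A2 = z*A1 - A0" "A1 = P*B1 - Q*C1" "A0 = P*B0 - Q*C0" "B2 = z*B1 - B0" "C2 = z*C1 - C0"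
  shows "A2 = P*B2 - Q*C2"
  unfolding assms(1,2,3,4,5) by (simp add: algebra_simps)

lemma S_add_aux: "(S (p+q) z = S p z * S q z - S (p-1) z * S (q-1) z) \<and>
   (S (p+(q+1)) z = S p z * S (q+1) z - S (p-1) z * S q z)"
proof (induction q rule: int_induct[where k=0])
  case base
  have "S (p+1) z = z * S p z - S (p-1) z" by (rule S_rec)
  then show ?case by (simp add: S0 Sm1 S1)
next
  case (step1 i)
  have e1: "p+(i+1)+1 = p+(i+1+1)" "p+(i+1)-1 = p+i" "i+1-1 = i" by simp_all
  have a: "S (p+(i+1+1)) z = z * S (p+(i+1)) z - S (p+i) z" using S_rec[of "p+(i+1)" z] unfolding e1 .
  have b: "S (i+1+1) z = z * S (i+1) z - S i z" using S_rec[of "i+1" z] unfolding e1 .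
  have h1: "S (p+i) z = S p z * S i z - S (p - 1) z * S (i - 1) z" and h2: "S (p + (i + 1)) z = S p z * S (i + 1) z - S (p - 1) z * S i z" using step1(2) by auto
  have c: "S (p+(i+1+1)) z = S p z * S (i+1+1) z - S (p - 1) z * S (i + 1) z"
    by (rule step_alg[OF a h2 h1 b S_rec[of i z]])
  show ?case unfolding e1 using h2 c by blast
next
  case (step2 i)
  have e1: "p+(i-1) = p+i-1" "i-1+1 = i" "p+(i-1+1) = p+i" by simp_all
  have a: "S (p+(i-1)) z = z * S (p+i) z - S (p+(i+1)) z" using S_rec'[of "p+i" z] unfolding e1 by (simp add: add.assoc)
  have b: "S (i-1) z = z * S i z - S (i+1) z" by (rule S_rec')
  have h1: "S (p+i) z = S p z * S i z - S (p - 1) z * S (i - 1) z" and h2: "S (p + (i + 1)) z = S p z * S (i + 1) z - S (p - 1) z * S i z" using step2(2) by auto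
  have c: "S (i-1-1) z = z * S (i-1) z - S i z" using S_rec'[of "i-1" z] unfolding e1 .
  have h3: "S (p+(i-1)) z = S p z * S (i-1) z - S (p - 1) z * S (i - 1-1) z"
    by (rule step_alg[OF a h1 h2 b c])
  show ?case using h1 h3 by simp
qed

lemma S_add: "S (p+q) z = S p z * S q z - S (p-1) z * S (q-1) z"
  using S_add_aux by blast

lemma S3: "S (3*m) z = (S m z)^3 - 3 * S m z * (S (m-1) z)^2 + z * (S (m-1) z)^3"
proof -
  have i1: "m + m = 2*m" "m + (m-1) = 2*m-1" "2*m + m = 3*m" "m-1-1 = m-2" "m-1+1 = m" by simp_all
  have 1: "S (2*m) z = S m z * S m z - S (m-1) z * S (m-1) z" using S_add[of m m z] unfolding i1 .
  have 2: "S (2*m-1) z = S m z * S (m-1) z - S (m-1) z * S (m-2) z" using S_add[of m "m-1" z] unfolding i1 .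
  have 3: "S (m-2) z = z * S (m-1) z - S m z" using S_rec'[of "m-1" z] unfolding i1 .
  have 4: "S (3*m) z = S (2*m) z * S m z - S (2*m-1) z * S (m-1) z" using S_add[of "2*m" m z] unfolding i1 .
  show ?thesis unfolding 4 2 1 3 by (simp add: algebra_simps power2_eq_square power3_eq_cube)
qed



lemma d_x: "deriv (\<lambda>t. a*t^2 + b*t*y + a*y^2 + c*u^2) x = 2*a*x + b*y"
  by (rule DERIV_imp_deriv) (auto intro!: derivative_eq_intros simp: power2_eq_square algebra_simps)
lemma d_y: "deriv (\<lambda>t. a*x^2 + b*x*t + a*t^2 + c*u^2) y = b*x + 2*a*y"
  by (rule DERIV_imp_deriv) (auto intro!: derivative_eq_intros simp: power2_eq_square algebra_simps)
lemma d_u: "deriv (\<lambda>t. a*x^2 + b*x*y + a*y^2 + c*t^2) u = 2*c*u"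
  by (rule DERIV_imp_deriv) (auto intro!: derivative_eq_intros simp: power2_eq_square algebra_simps)

lemma deg_form:
  fixes a b c :: complex
  assumes Q: "\<And>x y u. Q x y u = a*x^2 + b*x*y + a*y^2 + c*u^2"
  shows "degenerate Q \<longleftrightarrow> c * (4*a^2 - b^2) = 0"
proof -
  have QQ: "Q = (\<lambda>x y u. a*x^2 + b*x*y + a*y^2 + c*u^2)" using Q by (intro ext) simp
  have deg: "degenerate Q \<longleftrightarrow> (\<exists>x y u. (x, y, u) \<noteq> (0, 0, 0) \<and> a*x^2 + b*x*y + a*y^2 + c*u^2 = 0
      \<and> 2*a*x + b*y = 0 \<and> b*x + 2*a*y = 0 \<and> 2*c*u = 0)"
    unfolding degenerate_def QQ d_x d_y d_u by simp
  show ?thesis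
  proof
    assume "degenerate Q"
    then obtain x y u where nz: "(x, y, u) \<noteq> (0, 0, 0)" and e1: "2*a*x + b*y = 0" and e2: "b*x + 2*a*y = 0"
      and e3: "2*c*u = 0" unfolding deg by blast
    show "c * (4*a^2 - b^2) = 0"
    proof (rule ccontr)
      assume h: "c * (4*a^2 - b^2) \<noteq> 0"
      then have "u = 0" using e3 by auto
      have "(4*a^2 - b^2) * x = 2*a*(2*a*x + b*y) - b*(b*x + 2*a*y)" by algebra
      then have "(4*a^2 - b^2) * x = 0" using e1 e2 by simp
      moreover have "(4*a^2 - b^2) * y = 2*a*(b*x + 2*a*y) - b*(2*a*x + b*y)" by algebra
      then have "(4*a^2 - b^2) * y = 0" using e1 e2 by simp
      ultimately have "x = 0" "y = 0" using h by auto
      with \<open>u = 0\<close> nz show False by simp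
    qed
  next
    assume h: "c * (4*a^2 - b^2) = 0"
    show "degenerate Q"
    proof (cases "c = 0")
      case True
      then show ?thesis unfolding deg by (intro exI[of _ 0] exI[of _ 1]) simp
    next
      case False
      then have h2: "4*a^2 = b^2" using h by simp
      show ?thesis
      proof (cases "b = 0 \<and> a = 0")
        case True
        then show ?thesis unfolding deg by (intro exI[of _ 1] exI[of _ 0]) simp
      next
        case False
        have "a*b^2 + b*b*(-2*a) + a*(-2*a)^2 = a*(4*a^2 - b^2)" by algebra
        then show ?thesis unfolding deg using False h2
          by (intro exI[of _ b] exI[of _ "-2*a"] exI[of _ 0]) (auto simp: algebra_simps power2_eq_square)
      qed
    qed
  qed
qed



lemma pos_monic: "degree (chebS_pos n) \<le> n \<and> coeff (chebS_pos n) n = 1"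
proof (induction n rule: chebS_pos.induct)
  case 1 then show ?case by simp
next
  case 2 then show ?case by simp
next
  case (3 n)
  have d1: "degree ([:0, 1:] * chebS_pos (Suc n)) \<le> Suc (Suc n)"
    using 3(1) by (simp add: degree_pCons_le order.trans[OF degree_mult_le])
  have d2: "degree (chebS_pos n) \<le> Suc (Suc n)" using 3(2) by simp
  have c2: "coeff (chebS_pos n) (Suc (Suc n)) = 0" using 3(2) by (intro coeff_eq_0) simp
  show ?case using d1 d2 c2 3(1) by (auto intro: degree_diff_le)
qed

lemma pos_nz: "chebS_pos n \<noteq> 0"
  using pos_monic[of n] by auto

lemma neg_pos: "chebS_neg (Suc (Suc n)) = - chebS_pos n"
  by (induction n rule: chebS_pos.induct) (simp_all add: algebra_simps)

lemma chebS_nz: assumes "m \<ge> 1 \<or> m \<le> -2" shows "chebS m \<noteq> 0" "chebS (m-1) \<noteq> 0"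
proof -
  have "chebS j \<noteq> 0" if "j \<ge> 0 \<or> j \<le> -2" for j
  proof (cases "j \<ge> 0")
    case True then show ?thesis by (simp add: chebS_def pos_nz)
  next
    case False
    then have "nat (-j) = Suc (Suc (nat (-j-2)))" using that by simp
    then have "chebS j = chebS_neg (Suc (Suc (nat (-j-2))))" using False by (simp add: chebS_def del: chebS_neg.simps)
    then show ?thesis unfolding neg_pos using pos_nz by simp
  qed
  then show "chebS m \<noteq> 0" "chebS (m-1) \<noteq> 0" using assms by auto
qed

lemma dml: "degree (p::'a::idom poly) \<le> a \<Longrightarrow> degree q \<le> b \<Longrightarrow> degree (p*q) \<le> a + b"
  by (meson add_mono degree_mult_le order.trans)

lemma Fz_top:
  fixes A B :: "complex poly" and x y u c :: complex
  assumes A: "A \<noteq> 0" and B: "B \<noteq> 0"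
  defines "D \<equiv> degree A + 2 * degree B + 2"
  defines "P \<equiv> (([:x * y:] - smult (u\<^sup>2) [:0,1:])
        + ([:c:] + smult (x * y) [:0,1:] - smult (u\<^sup>2) ([:0,1:] ^ 2)) * A * B) * B
      - smult (u\<^sup>2) A"
  shows "degree P \<le> D" "coeff P D = -(u\<^sup>2) * (lead_coeff A * (lead_coeff B)^2)"
proof -
  define X :: "complex poly" where "X = [:0,1:]"
  define R where "R = ([:x * y:] - smult (u\<^sup>2) X) * B + ([:c:] + smult (x * y) X) * A * B * B - smult (u\<^sup>2) A"
  define T where "T = X ^ 2 * A * B * B"
  have PRT: "P = R + smult (-(u\<^sup>2)) T" unfolding P_def R_def T_def X_def by (simp add: algebra_simps)
  have dX: "degree X = 1" unfolding X_def by simp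
  have X0: "X \<noteq> 0" unfolding X_def by simp
  have e1: "degree ([:x * y:] - smult (u\<^sup>2) X) \<le> 1"
    by (intro degree_diff_le) (auto simp: dX order.trans[OF degree_smult_le])
  have e2: "degree ([:c:] + smult (x * y) X) \<le> 1"
    by (intro degree_add_le) (auto simp: dX order.trans[OF degree_smult_le])
  have r1: "degree (([:x * y:] - smult (u\<^sup>2) X) * B) \<le> 1 + degree B"
    by (rule dml[OF e1 order.refl])
  have r2: "degree (([:c:] + smult (x * y) X) * A * B * B) \<le> 1 + degree A + degree B + degree B"
    by (intro dml e2 order.refl)
  have r3: "degree (smult (u\<^sup>2) A) \<le> degree A" by (rule degree_smult_le)
  have dR: "degree R < D" unfolding R_def
    by (intro degree_diff_less degree_add_less le_less_trans[OF r1] le_less_trans[OF r2] le_less_trans[OF r3]) (auto simp: D_def)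
  have T0: "X ^ 2 \<noteq> 0" "X ^ 2 * A \<noteq> 0" "X ^ 2 * A * B \<noteq> 0" using X0 A B by auto
  have dT: "degree T = D" unfolding T_def D_def using T0 A B X0
    by (simp add: degree_mult_eq degree_power_eq dX)
  have lT: "lead_coeff T = lead_coeff A * (lead_coeff B)^2" unfolding T_def
    by (simp add: lead_coeff_mult lead_coeff_power X_def power2_eq_square)
  have cR: "coeff R D = 0" using dR by (intro coeff_eq_0) simp
  show "degree P \<le> D" unfolding PRT
    by (intro degree_add_le) (use dR dT in \<open>auto intro: order.trans[OF degree_smult_le]\<close>)
  show "coeff P D = -(u\<^sup>2) * (lead_coeff A * (lead_coeff B)^2)"
    unfolding PRT using cR dT lT by simp
qed


lemma fiber_aff_exp:
  "fiber_aff m z x y u = (-(S m z * (S (m-1) z)^2))*x^2 + (S (m-1) z + z * S m z * (S (m-1) z)^2)*x*y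
     + (-(S m z * (S (m-1) z)^2))*y^2 + (-z * S (m-1) z + (4 - z^2) * S m z * (S (m-1) z)^2 - S m z)*u^2"
proof -
  have "fiber_aff m z x y u = ((x*y - u^2*z) + (4*u^2 - x^2 - y^2 + x*y*z - u^2*z^2) * S m z * S (m-1) z) * S (m-1) z - u^2 * S m z"
    unfolding fiber_aff_def Fz_def Let_def S_def by (simp add: algebra_simps)
  then show ?thesis by (simp add: algebra_simps power2_eq_square)
qed

lemma L_gamma: fixes a b z :: complex shows
  "-z*b + (4-z^2)*a*b^2 - a = -(a^3 - 3*a*b^2 + z*b^3) + (z*b+a)*(a^2+b^2-z*a*b-1)"
  by (simp add: algebra_simps power2_eq_square power3_eq_cube)

lemma L_disc: fixes a b z :: complex shows
  "4*(-(a*b^2))^2 - (b+z*a*b^2)^2 = -(b^2)*((a+b)^2 - (a^2+b^2-z*a*b-1))*((a-b)^2 - (a^2+b^2-z*a*b-1))"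
  by (simp add: algebra_simps power2_eq_square power3_eq_cube)

lemma fib_z: fixes m :: int and z :: complex shows
   "(degenerate (fiber_aff m z) \<longleftrightarrow>
          (S (m - 1) z = 0 \<or> S (3 * m) z = 0 \<or> S m z - S (m - 1) z = 0 \<or> S m z + S (m - 1) z = 0))
    \<and> (S (m - 1) z = 0 \<longrightarrow> same_conic (fiber_aff m z) (\<lambda>x y u. u\<^sup>2))
    \<and> (S (3 * m) z = 0 \<longrightarrow> same_conic (fiber_aff m z)
          (\<lambda>x y u. (x * S m z - y * S (m - 1) z) * (y * S m z - x * S (m - 1) z)))
    \<and> (S m z - S (m - 1) z = 0 \<longrightarrow> same_conic (fiber_aff m z)
          (\<lambda>x y u. (x - y)\<^sup>2 - (2 - z) * u\<^sup>2))
    \<and> (S m z + S (m - 1) z = 0 \<longrightarrow> same_conic (fiber_aff m z)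
          (\<lambda>x y u. (x + y)\<^sup>2 - (2 + z) * u\<^sup>2))"
proof -
  define a where "a = S m z"
  define b where "b = S (m-1) z"
  define E where "E = a^2+b^2-z*a*b-1"
  have E0: "E = 0" unfolding E_def a_def b_def using S_ident[of m z] by simp
  have S3': "S (3*m) z = a^3 - 3*a*b^2 + z*b^3" unfolding a_def b_def by (rule S3)
  have exp: "fiber_aff m z x y u = (-(a*b^2))*x^2 + (b + z*a*b^2)*x*y + (-(a*b^2))*y^2
     + (-z*b + (4-z^2)*a*b^2 - a)*u^2" for x y u
    unfolding a_def b_def by (rule fiber_aff_exp)
  have gam0: "-z*b + (4-z^2)*a*b^2 - a = -(a^3 - 3*a*b^2 + z*b^3) + (z*b+a)*E"
    unfolding E_def by (rule L_gamma)
  have gam: "-z*b + (4-z^2)*a*b^2 - a = - S (3*m) z"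
    unfolding gam0 E0 S3' by simp
  have disc0: "4*(-(a*b^2))^2 - (b+z*a*b^2)^2 = -(b^2)*((a+b)^2 - E)*((a-b)^2 - E)"
    unfolding E_def by (rule L_disc)
  have disc: "4*(-(a*b^2))^2 - (b+z*a*b^2)^2 = -(b^2)*(a+b)^2*(a-b)^2"
    unfolding disc0 E0 by simp
  have iff1: "(- S (3*m) z * (-(b^2)*(a+b)^2*(a-b)^2) = 0) \<longleftrightarrow> (b = 0 \<or> S (3*m) z = 0 \<or> a - b = 0 \<or> a + b = 0)"
    by auto
  have P2: "degenerate (fiber_aff m z) \<longleftrightarrow>
        (S (m - 1) z = 0 \<or> S (3 * m) z = 0 \<or> S m z - S (m - 1) z = 0 \<or> S m z + S (m - 1) z = 0)"
    unfolding deg_form[OF exp] gam disc iff1 unfolding a_def b_def ..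
  have Eab: "a^2+b^2-z*a*b-1 = 0" using E0 unfolding E_def .
  have P4: "S (m - 1) z = 0 \<longrightarrow> same_conic (fiber_aff m z) (\<lambda>x y u. u\<^sup>2)"
  proof
    assume "S (m-1) z = 0"
    then have b0: "b = 0" by (simp add: b_def)
    then have "a^2 = 1" using Eab by simp
    then have "a \<noteq> 0" by auto
    then show "same_conic (fiber_aff m z) (\<lambda>x y u. u\<^sup>2)"
      unfolding same_conic_def exp b0 by (intro exI[of _ "-a"]) simp
  qed
  have P5: "S (3 * m) z = 0 \<longrightarrow> same_conic (fiber_aff m z)
        (\<lambda>x y u. (x * S m z - y * S (m - 1) z) * (y * S m z - x * S (m - 1) z))"
  proof
    assume h: "S (3 * m) z = 0"
    have bnz: "b \<noteq> 0"
    proof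
      assume b0: "b = 0"
      then have a2: "a^2 = 1" using Eab by simp
      have a3: "a^3 = 0" using h S3' b0 by simp
      then have "a = 0" by simp
      with a2 show False by simp
    qed
    have g0: "-z*b + (4-z^2)*a*b^2 - a = 0" using gam h by simp
    have id: "(-(a*b^2))*x^2 + (b + z*a*b^2)*x*y + (-(a*b^2))*y^2 + (-z*b + (4-z^2)*a*b^2 - a)*u^2
       = b * ((x * a - y * b) * (y * a - x * b)) + (-(b*E))*x*y + (-z*b + (4-z^2)*a*b^2 - a)*u^2" for x y u
      unfolding E_def by (simp add: algebra_simps power2_eq_square)
    have "fiber_aff m z x y u = b * ((x * a - y * b) * (y * a - x * b))" for x y u
      unfolding exp id unfolding g0 E0 by simp
    then show "same_conic (fiber_aff m z) (\<lambda>x y u. (x * S m z - y * S (m - 1) z) * (y * S m z - x * S (m - 1) z))"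
      unfolding same_conic_def using bnz unfolding a_def b_def by blast
  qed
  have P6: "S m z - S (m - 1) z = 0 \<longrightarrow> same_conic (fiber_aff m z) (\<lambda>x y u. (x - y)\<^sup>2 - (2 - z) * u\<^sup>2)"
  proof
    assume "S m z - S (m - 1) z = 0"
    then have ba: "b = a" by (simp add: a_def b_def)
    have anz: "a \<noteq> 0" using Eab ba by auto
    have id: "(-(a*a^2))*x^2 + (a + z*a*a^2)*x*y + (-(a*a^2))*y^2 + (-z*a + (4-z^2)*a*a^2 - a)*u^2
       = (-(a^3)) * ((x - y)\<^sup>2 - (2 - z) * u\<^sup>2) + E * ((-a)*x*y + (1+z)*a*u^2)" for x y u
      unfolding E_def ba by (simp add: algebra_simps power2_eq_square power3_eq_cube)
    have "fiber_aff m z x y u = (-(a^3)) * ((x - y)\<^sup>2 - (2 - z) * u\<^sup>2)" for x y u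
      unfolding exp ba unfolding id unfolding E0 by simp
    moreover have "-(a^3) \<noteq> 0" using anz by simp
    ultimately show "same_conic (fiber_aff m z) (\<lambda>x y u. (x - y)\<^sup>2 - (2 - z) * u\<^sup>2)"
      unfolding same_conic_def by blast
  qed
  have P7: "S m z + S (m - 1) z = 0 \<longrightarrow> same_conic (fiber_aff m z) (\<lambda>x y u. (x + y)\<^sup>2 - (2 + z) * u\<^sup>2)"
  proof
    assume h: "S m z + S (m - 1) z = 0"
    have ba: "b = -a" using h unfolding a_def b_def by (simp add: add_eq_0_iff2 add.commute)
    have anz: "a \<noteq> 0" using Eab ba by auto
    have id: "(-(a*(-a)^2))*x^2 + ((-a) + z*a*(-a)^2)*x*y + (-(a*(-a)^2))*y^2 + (-z*(-a) + (4-z^2)*a*(-a)^2 - a)*u^2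
       = (-(a^3)) * ((x + y)\<^sup>2 - (2 + z) * u\<^sup>2) + E * (a*x*y - (z-1)*a*u^2)" for x y u
      unfolding E_def ba by (simp add: algebra_simps power2_eq_square power3_eq_cube)
    have "fiber_aff m z x y u = (-(a^3)) * ((x + y)\<^sup>2 - (2 + z) * u\<^sup>2)" for x y u
      unfolding exp ba unfolding id unfolding E0 by simp
    moreover have "-(a^3) \<noteq> 0" using anz by simp
    ultimately show "same_conic (fiber_aff m z) (\<lambda>x y u. (x + y)\<^sup>2 - (2 + z) * u\<^sup>2)"
      unfolding same_conic_def by blast
  qed
  show ?thesis by (intro conjI P2 P4 P5 P6 P7)
qed

theorem proposition7p7:
  fixes m :: int
  assumes "m \<ge> 1 \<or> m \<le> -2"
  shows "degenerate (fiber_inf m)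
    \<and> (\<forall>z. degenerate (fiber_aff m z) \<longleftrightarrow>
          (S (m - 1) z = 0 \<or> S (3 * m) z = 0 \<or> S m z - S (m - 1) z = 0 \<or> S m z + S (m - 1) z = 0))
    \<and> same_conic (fiber_inf m) (\<lambda>x y u. u\<^sup>2)
    \<and> (\<forall>z. S (m - 1) z = 0 \<longrightarrow> same_conic (fiber_aff m z) (\<lambda>x y u. u\<^sup>2))
    \<and> (\<forall>z. S (3 * m) z = 0 \<longrightarrow> same_conic (fiber_aff m z)
          (\<lambda>x y u. (x * S m z - y * S (m - 1) z) * (y * S m z - x * S (m - 1) z)))
    \<and> (\<forall>z. S m z - S (m - 1) z = 0 \<longrightarrow> same_conic (fiber_aff m z)
          (\<lambda>x y u. (x - y)\<^sup>2 - (2 - z) * u\<^sup>2))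
    \<and> (\<forall>z. S m z + S (m - 1) z = 0 \<longrightarrow> same_conic (fiber_aff m z)
          (\<lambda>x y u. (x + y)\<^sup>2 - (2 + z) * u\<^sup>2))"
proof -
  define A where "A = chebS m"
  define B where "B = chebS (m-1)"
  have A0: "A \<noteq> 0" and B0: "B \<noteq> 0" using chebS_nz[OF assms] unfolding A_def B_def by auto
  define D where "D = degree A + 2 * degree B + 2"
  define L where "L = lead_coeff A * (lead_coeff B)^2"
  have L0: "L \<noteq> 0" using A0 B0 unfolding L_def by simp
  have Fz_eq: "Fz m x y u = (([:x * y:] - smult (u\<^sup>2) [:0,1:])
        + ([:4 * u\<^sup>2 - x\<^sup>2 - y\<^sup>2:] + smult (x * y) [:0,1:] - smult (u\<^sup>2) ([:0,1:] ^ 2)) * A * B) * B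
      - smult (u\<^sup>2) A" for x y u
    unfolding Fz_def Let_def A_def B_def by simp
  have degle: "degree (Fz m x y u) \<le> D" for x y u
    unfolding Fz_eq D_def by (rule Fz_top(1)[OF A0 B0])
  have coeffD: "coeff (Fz m x y u) D = -(u\<^sup>2) * L" for x y u
    unfolding Fz_eq D_def L_def by (rule Fz_top(2)[OF A0 B0])
  have dD: "degree (Fz m 0 0 1) = D"
    using degle[of 0 0 1] coeffD[of 0 0 1] L0 by (metis le_antisym le_degree mult_eq_0_iff neg_equal_0_iff_equal one_power2 zero_neq_one)
  have zd: "zdeg m = D" unfolding zdeg_def
  proof (rule Max_eqI)
    show "finite {degree (Fz m x y u) |x y u. True}"
      by (rule finite_subset[of _ "{..D}"]) (auto simp: degle)
    show "\<And>d. d \<in> {degree (Fz m x y u) |x y u. True} \<Longrightarrow> d \<le> D" using degle by auto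
    show "D \<in> {degree (Fz m x y u) |x y u. True}" using dD by force
  qed
  have finf: "fiber_inf m x y u = 0*x^2 + 0*x*y + 0*y^2 + (-L)*u^2" for x y u
    unfolding fiber_inf_def zd coeffD by simp
  have P1: "degenerate (fiber_inf m)" using deg_form[of "fiber_inf m", OF finf] by simp
  have P3: "same_conic (fiber_inf m) (\<lambda>x y u. u\<^sup>2)"
    unfolding same_conic_def using L0 finf by (intro exI[of _ "-L"]) simp
  show ?thesis
    apply (intro conjI allI)
    apply (rule P1)
    apply (rule conjunct1[OF fib_z])
    apply (rule P3)
    apply (rule conjunct1[OF conjunct2[OF fib_z]])
    apply (rule conjunct1[OF conjunct2[OF conjunct2[OF fib_z]]])
    apply (rule conjunct1[OF conjunct2[OF conjunct2[OF conjunct2[OF fib_z]]]])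
    apply (rule conjunct2[OF conjunct2[OF conjunct2[OF conjunct2[OF fib_z]]]])
    done
qed

end
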